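(* Let $a<b$ be positive integers such that $b$ is not a multiple of $a$, and let $$B=\begin{pmatrix}0&-a&0&b\\1&0&-1&0\\0&a&0&-b\\-1&0&1&0\end{pmatrix}.$$ Then $B$ is skew-symmetrizable with skew-symmetrizer $\operatorname{diag}(1,a,1,b)$ (hence strongly primitive when $\gcd(a,b)=1$), and $B$ does not admit a global unfolding. More precisely, for every unfolding $(C,(e_i),(E_i))$ of $B$, the data $(\mu_2\mu_4(C),(e_i),(E_i))$ is not an unfolding of $\mu_2\mu_4(B)$: the $E_1\times E_3$ block of $\mu_2\mu_4(C)$ contains both a positive and a negative entry.
   Context: An $n\times n$ integer matrix $B$ is skew-symmetrizable if there is $D=\operatorname{diag}(d_1,\dots,d_n)$ with positive integer entries such that $DB$ is skew-symmetric; strongly primitive if such $D$ can be chosen with pairwise coprime $d_i$. Matrix mutation: $\mu_k(B)=B'$ with $b'_{ij}=-b_{ij}$ if $i=k$ or $j=k$, and $b'_{ij}=b_{ij}+\frac{b_{ik}|b_{kj}|+|b_{ik}|b_{kj}}{2}$ otherwise. An unfolding of $B$ is a triple $(C,(e_i)_{i=1}^n,(E_i)_{i=1}^n)$: positive integers $e_i$ with $b_{ij}e_j=-b_{ji}e_i$; disjoint index sets $E_i$ with $|E_i|=e_i$; a skew-symmetric integer matrix $C$ indexed by $\bigcup E_i$, such that (1) the sum of entries in each column of each $E_i\times E_j$ block of $C$ equals $b_{ij}$, and (2) if $b_{ij}\ge0$ then the $E_i\times E_j$ block of $C$ has all entries nonnegative. For an unfolding, the composite mutation $\mu_k=\prod_{\bar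 k\in E_k}\mu_{\bar k}$ of $C$ is well defined (its factors commute). $B$ admits a global unfolding if some unfolding $(C,(e_i),(E_i))$ has the property that for every finite sequence $(k_1,\dots,k_\ell)$ of indices, $(\mu_{k_\ell}\cdots\mu_{k_1}(C),(e_i),(E_i))$ is an unfolding of $\mu_{k_\ell}\cdots\mu_{k_1}(B)$. *)

theory Defs
  imports Main
begin

text \<open>An n x n
  exchange matrix B uses the indices 0..n-1 (the paper's index i corresponds
  to i-1 here).  The unfolded matrix C is indexed by an arbitrary type 'v;
  only its entries on the union of the sets E i matter.\<close>

definition skew_symmetrizer :: "nat \<Rightarrow> (nat \<Rightarrow> nat \<Rightarrow> int) \<Rightarrow> (nat \<Rightarrow> int) \<Rightarrow> bool" where
  "skew_symmetrizer n B d \<longleftrightarrow>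
     (\<forall>i<n. d i > 0) \<and> (\<forall>i<n. \<forall>j<n. d i * B i j = - (d j * B j i))"

definition skew_symmetrizable :: "nat \<Rightarrow> (nat \<Rightarrow> nat \<Rightarrow> int) \<Rightarrow> bool" where
  "skew_symmetrizable n B \<longleftrightarrow> (\<exists>d. skew_symmetrizer n B d)"

definition strongly_primitive :: "nat \<Rightarrow> (nat \<Rightarrow> nat \<Rightarrow> int) \<Rightarrow> bool" where
  "strongly_primitive n B \<longleftrightarrow>
     (\<exists>d. skew_symmetrizer n B d \<and> (\<forall>i<n. \<forall>j<n. i \<noteq> j \<longrightarrow> coprime (d i) (d j)))"

definition mut :: "'i \<Rightarrow> ('i \<Rightarrow> 'i \<Rightarrow> int) \<Rightarrow> ('i \<Rightarrow> 'i \<Rightarrow> int)" where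
  "mut k B = (\<lambda>i j. if i = k \<or> j = k then - B i j
                     else B i j + (B i k * \<bar>B k j\<bar> + \<bar>B i k\<bar> * B k j) div 2)"

text \<open>Mutation sequence: the list [k1,...,kl] means mu_kl ... mu_k1 (k1 applied first).\<close>
definition mut_seq :: "('i \<Rightarrow> 'i \<Rightarrow> int) \<Rightarrow> 'i list \<Rightarrow> ('i \<Rightarrow> 'i \<Rightarrow> int)" where
  "mut_seq B ks = foldl (\<lambda>M k. mut k M) B ks"

definition comp_mut :: "(nat \<Rightarrow> 'v set) \<Rightarrow> nat \<Rightarrow> ('v \<Rightarrow> 'v \<Rightarrow> int) \<Rightarrow> ('v \<Rightarrow> 'v \<Rightarrow> int)" where
  "comp_mut E k C = Finite_Set.fold mut C (E k)"

definition comp_mut_seq :: "(nat \<Rightarrow> 'v set) \<Rightarrow> ('v \<Rightarrow> 'v \<Rightarrow> int) \<Rightarrow> nat list \<Rightarrow> ('v \<Rightarrow> 'v \<Rightarrow> int)" where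
  "comp_mut_seq E C ks = foldl (\<lambda>M k. comp_mut E k M) C ks"

definition is_unfolding ::
  "nat \<Rightarrow> (nat \<Rightarrow> nat \<Rightarrow> int) \<Rightarrow> ('v \<Rightarrow> 'v \<Rightarrow> int) \<Rightarrow> (nat \<Rightarrow> nat) \<Rightarrow> (nat \<Rightarrow> 'v set) \<Rightarrow> bool" where
  "is_unfolding n B C e E \<longleftrightarrow>
     (\<forall>i<n. e i > 0) \<and>
     (\<forall>i<n. \<forall>j<n. B i j * int (e j) = - (B j i * int (e i))) \<and>
     (\<forall>i<n. finite (E i) \<and> card (E i) = e i) \<and>
     (\<forall>i<n. \<forall>j<n. i \<noteq> j \<longrightarrow> E i \<inter> E j = {}) \<and>
     (\<forall>x\<in>(\<Union>i<n. E i). \<forall>y\<in>(\<Union>i<n. E i). C x y = - C y x) \<and>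
     (\<forall>i<n. \<forall>j<n. \<forall>y\<in>E j. (\<Sum>x\<in>E i. C x y) = B i j) \<and>
     (\<forall>i<n. \<forall>j<n. B i j \<ge> 0 \<longrightarrow> (\<forall>x\<in>E i. \<forall>y\<in>E j. C x y \<ge> 0))"

definition is_global_unfolding ::
  "nat \<Rightarrow> (nat \<Rightarrow> nat \<Rightarrow> int) \<Rightarrow> ('v \<Rightarrow> 'v \<Rightarrow> int) \<Rightarrow> (nat \<Rightarrow> nat) \<Rightarrow> (nat \<Rightarrow> 'v set) \<Rightarrow> bool" where
  "is_global_unfolding n B C e E \<longleftrightarrow>
     is_unfolding n B C e E \<and>
     (\<forall>ks. set ks \<subseteq> {..<n} \<longrightarrow>
        is_unfolding n (mut_seq B ks) (comp_mut_seq E C ks) e E)"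

definition Bmat :: "int \<Rightarrow> int \<Rightarrow> nat \<Rightarrow> nat \<Rightarrow> int" where
  "Bmat a b i j = (if i < 4 \<and> j < 4 then
      [[0, -a, 0, b], [1, 0, -1, 0], [0, a, 0, -b], [-1, 0, 1, 0]] ! i ! j else 0)"

definition dex :: "int \<Rightarrow> int \<Rightarrow> nat \<Rightarrow> int" where
  "dex a b i = (if i < 4 then [1, a, 1, b] ! i else 0)"

end

theory Submission
  imports Defs
begin


definition cmf :: "'v set \<Rightarrow> ('v\<Rightarrow>'v\<Rightarrow>int) \<Rightarrow> ('v\<Rightarrow>'v\<Rightarrow>int)" where
"cmf S C = (\<lambda>i j. if i \<in> S \<and> j \<in> S then C i j else if i \<in> S \<or> j \<in> S then - C i j
   else C i j + (\<Sum>x\<in>S. (C i x * \<bar>C x j\<bar> + \<bar>C i x\<bar> * C x j) div 2))"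

lemma cmf_empty: "cmf {} C = C"
  by (simp add: cmf_def)

lemma cmf_insert:
  assumes fin: "finite A" and xA: "x \<notin> A" and sub: "insert x A \<subseteq> S"
    and z: "\<forall>u\<in>S. \<forall>w\<in>S. C u w = 0"
  shows "mut x (cmf A C) = cmf (insert x A) C"
proof (intro ext)
  fix i j
  have xS: "x \<in> S" using sub by auto
  have AS: "A \<subseteq> S" using sub by auto
  have zx: "C x w = 0" "C w x = 0" if "w \<in> A" for w using z xS AS that by auto
  have s1: "(\<Sum>w\<in>A. (C x w * \<bar>C w j\<bar> + \<bar>C x w\<bar> * C w j) div 2) = 0" for j
    using zx by simp
  have s2: "(\<Sum>w\<in>A. (C i w * \<bar>C w x\<bar> + \<bar>C i w\<bar> * C w x) div 2) = 0" for i
    using zx by simp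
  have cxx: "C x x = 0" using z xS by auto
  have cix: "cmf A C i x = (if i \<in> A then 0 else C i x)" if "i \<noteq> x" for i
    using that xA s2 zx cxx by (auto simp: cmf_def)
  have cxj: "cmf A C x j = (if j \<in> A then 0 else C x j)" if "j \<noteq> x" for j
    using that xA s1 zx cxx by (auto simp: cmf_def)
  show "mut x (cmf A C) i j = cmf (insert x A) C i j"
  proof (cases "i = x \<or> j = x")
    case True
    then show ?thesis using xA s1 s2 cxx zx unfolding mut_def cmf_def
      by (auto simp del: div_0)
  next
    case False
    then have ne: "i \<noteq> x" "j \<noteq> x" by auto
    show ?thesis
    proof (cases "i \<in> A \<or> j \<in> A")
      case True
      then show ?thesis using ne cix[OF ne(1)] cxj[OF ne(2)] unfolding mut_def
        by (auto simp: cmf_def)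
    next
      case F2: False
      then show ?thesis using ne cix[OF ne(1)] cxj[OF ne(2)] fin xA unfolding mut_def
        by (simp add: cmf_def)
    qed
  qed
qed


lemma my_fold_graph_finite: "fold_graph f z A y \<Longrightarrow> finite A"
  by (induct rule: fold_graph.induct) simp_all

lemma fold_graph_cmf:
  assumes "fold_graph mut C A y" "A \<subseteq> S" "\<forall>u\<in>S. \<forall>w\<in>S. C u w = 0"
  shows "y = cmf A C"
  using assms(1,2)
proof (induction rule: fold_graph.induct)
  case emptyI
  then show ?case by (simp add: cmf_empty)
next
  case (insertI x A y)
  have fin: "finite A" by (rule my_fold_graph_finite[OF insertI.hyps(2)])
  have y: "y = cmf A C" using insertI.IH insertI.prems by simp
  show ?case unfolding y by (rule cmf_insert[OF fin insertI.hyps(1) insertI.prems assms(3)])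
qed

lemma fold_mut_cmf:
  assumes "finite S" "\<forall>u\<in>S. \<forall>w\<in>S. C u w = 0"
  shows "Finite_Set.fold mut C S = cmf S C"
proof -
  from finite_imp_fold_graph[OF assms(1), of mut C]
  obtain y where y: "fold_graph mut C S y" by (elim exE)
  have u: "z = cmf S C" if "fold_graph mut C S z" for z
    by (rule fold_graph_cmf[OF that subset_refl assms(2)])
  have g: "fold_graph mut C S (cmf S C)" using y u[OF y] by (simp only:)
  have t: "(THE z. fold_graph mut C S z) = cmf S C"
    by (rule the_equality[where P="\<lambda>z. fold_graph mut C S z", OF g u])
  show ?thesis unfolding Finite_Set.fold_def using assms(1) t by (simp only: if_True)
qed

lemma uniq:
  fixes f :: "'a \<Rightarrow> int"
  assumes "finite S" "\<forall>s\<in>S. f s \<ge> 0" "sum f S = 1"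
  shows "\<exists>s0\<in>S. \<forall>t\<in>S. f t = (if t = s0 then 1 else 0)"
proof -
  have "\<exists>s\<in>S. f s > 0"
  proof (rule ccontr)
    assume "\<not> ?thesis"
    then have "sum f S \<le> 0" by (intro sum_nonpos) auto
    then show False using assms(3) by simp
  qed
  then obtain s0 where s0: "s0 \<in> S" "f s0 > 0" by blast
  have le: "f s0 \<le> 1" using member_le_sum[of s0 S f] assms s0 by auto
  have f1: "f s0 = 1" using le s0 by simp
  have "sum f S = f s0 + sum f (S - {s0})" by (rule sum.remove[OF assms(1) s0(1)])
  then have "sum f (S - {s0}) = 0" using f1 assms(3) by simp
  then have "\<forall>t\<in>S - {s0}. f t = 0" using sum_nonneg_eq_0_iff[of "S - {s0}" f] assms by auto
  then show ?thesis using s0(1) f1 by (intro bexI[of _ s0]) auto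
qed

lemma sum_ind:
  fixes f g :: "'a \<Rightarrow> int"
  assumes "finite S" "s0 \<in> S" "\<forall>t\<in>S. f t = (if t = s0 then c else 0)"
  shows "(\<Sum>t\<in>S. f t * g t) = c * g s0"
proof -
  have "(\<Sum>t\<in>S. f t * g t) = (\<Sum>t\<in>S. if t = s0 then c * g t else 0)"
    using assms(3) by (intro sum.cong) auto
  also have "\<dots> = c * g s0" using assms(1,2) by (simp add: sum.delta)
  finally show ?thesis .
qed



lemma core:
  fixes a b :: int and C :: "'v \<Rightarrow> 'v \<Rightarrow> int"
  assumes a0: "0 < a" and ab: "a < b" and nd: "\<not> a dvd b"
    and U: "is_unfolding 4 (Bmat a b) C e E"
  shows "(\<exists>x\<in>E 0. \<exists>y\<in>E 2. comp_mut_seq E C [3, 1] x y > 0)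
       \<and> (\<exists>x\<in>E 0. \<exists>y\<in>E 2. comp_mut_seq E C [3, 1] x y < 0)"
proof -
  let ?B = "Bmat a b"
  note H = U[unfolded is_unfolding_def]
  have h1: "\<forall>i<4. e i > 0" using H by (elim conjE) assumption
  have h3: "\<forall>i<(4::nat). finite (E i) \<and> card (E i) = e i" using H by (elim conjE) assumption
  have h4: "\<forall>i<(4::nat). \<forall>j<4. i \<noteq> j \<longrightarrow> E i \<inter> E j = {}" using H by (elim conjE) assumption
  have h5: "\<forall>x\<in>(\<Union>i<(4::nat). E i). \<forall>y\<in>(\<Union>i<4. E i). C x y = - C y x" using H by (elim conjE) assumption
  have h6: "\<forall>i<4. \<forall>j<4. \<forall>y\<in>E j. (\<Sum>x\<in>E i. C x y) = ?B i j" using H by (elim conjE) assumption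
  have h7: "\<forall>i<4. \<forall>j<4. ?B i j \<ge> 0 \<longrightarrow> (\<forall>x\<in>E i. \<forall>y\<in>E j. C x y \<ge> 0)" using H by (elim conjE) assumption
  have fin: "\<And>i. i < 4 \<Longrightarrow> finite (E i)" using h3 by blast
  have ne0: "E 0 \<noteq> {}"
  proof
    assume "E 0 = {}"
    moreover have "card (E 0) = e 0" using h3 by simp
    ultimately have "e 0 = 0" by simp
    moreover have "e 0 > 0" using h1 by simp
    ultimately show False by simp
  qed
  have disj: "\<And>i j. i < 4 \<Longrightarrow> j < 4 \<Longrightarrow> i \<noteq> j \<Longrightarrow> E i \<inter> E j = {}"
    using h4 by blast
  have sk: "\<And>i j x y. i < 4 \<Longrightarrow> j < 4 \<Longrightarrow> x \<in> E i \<Longrightarrow> y \<in> E j \<Longrightarrow> C x y = - C y x"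
    using h5 by blast
  have cs: "\<And>i j y. i < 4 \<Longrightarrow> j < 4 \<Longrightarrow> y \<in> E j \<Longrightarrow> (\<Sum>x\<in>E i. C x y) = ?B i j"
    using h6 by blast
  have nn: "\<And>i j x y. i < 4 \<Longrightarrow> j < 4 \<Longrightarrow> 0 \<le> ?B i j \<Longrightarrow> x \<in> E i \<Longrightarrow> y \<in> E j \<Longrightarrow> 0 \<le> C x y"
    using h7 by blast
  have rs: "(\<Sum>y\<in>E j. C x y) = - ?B j i" if "i < 4" "j < 4" "x \<in> E i" for i j x
  proof -
    have "(\<Sum>y\<in>E j. C x y) = (\<Sum>y\<in>E j. - C y x)"
    proof (rule sum.cong[OF refl])
      fix y assume "y \<in> E j"
      then show "C x y = - C y x" using sk[of i j x y] that by blast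
    qed
    also have "\<dots> = - ?B j i" using cs[of j i x] that by (simp add: sum_negf)
    finally show ?thesis .
  qed
  have z: "C x y = 0" if "i < 4" "j < 4" "0 \<le> ?B i j" "0 \<le> ?B j i" "x \<in> E i" "y \<in> E j" for i j x y
  proof -
    have "0 \<le> C x y" by (rule nn[of i j x y]) (use that in auto)
    moreover have "0 \<le> C y x" by (rule nn[of j i y x]) (use that in auto)
    moreover have "C x y = - C y x" by (rule sk[of i j x y]) (use that in auto)
    ultimately show ?thesis by linarith
  qed
  have Bv: "?B 0 3 = b" "?B 3 0 = -1" "?B 0 1 = -a" "?B 1 0 = 1" "?B 1 2 = -1" "?B 2 1 = a"
    "?B 3 2 = 1" "?B 2 3 = -b" "?B 1 1 = 0" "?B 3 3 = 0" "?B 1 3 = 0" "?B 3 1 = 0"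
    "?B 0 2 = 0" "?B 2 0 = 0"
    by (simp_all add: Bmat_def)
  have z33: "\<forall>u\<in>E 3. \<forall>w\<in>E 3. C u w = 0" using z[of 3 3] Bv by auto
  have z13: "C u w = 0" if "u \<in> E 1" "w \<in> E 3" for u w using z[of 1 3 u w] Bv that by auto
  have z31: "C u w = 0" if "u \<in> E 3" "w \<in> E 1" for u w using z[of 3 1 u w] Bv that by auto
  have z11: "C u w = 0" if "u \<in> E 1" "w \<in> E 1" for u w using z[of 1 1 u w] Bv that by auto
  have z02: "C u w = 0" if "u \<in> E 0" "w \<in> E 2" for u w using z[of 0 2 u w] Bv that by auto
  have d: "E 0 \<inter> E 1 = {}" "E 0 \<inter> E 3 = {}" "E 2 \<inter> E 1 = {}" "E 2 \<inter> E 3 = {}" "E 1 \<inter> E 3 = {}"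
    using disj by auto
  define C1 where "C1 = cmf (E 3) C"
  have C1: "comp_mut E 3 C = C1" unfolding comp_mut_def C1_def by (rule fold_mut_cmf[OF fin z33]) simp
  have C1v: "C1 u w = C u w + (\<Sum>x\<in>E 3. (C u x * \<bar>C x w\<bar> + \<bar>C u x\<bar> * C x w) div 2)"
    if "u \<notin> E 3" "w \<notin> E 3" for u w using that unfolding C1_def cmf_def by simp
  have C1z: "\<forall>u\<in>E 1. \<forall>w\<in>E 1. C1 u w = 0"
  proof (intro ballI)
    fix u w assume uw: "u \<in> E 1" "w \<in> E 1"
    then have "u \<notin> E 3" "w \<notin> E 3" using d by auto
    then show "C1 u w = 0" unfolding C1v[OF \<open>u \<notin> E 3\<close> \<open>w \<notin> E 3\<close>]
      using z11[OF uw] z13[OF uw(1)] by simp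
  qed
  define C2 where "C2 = cmf (E 1) C1"
  have C2: "comp_mut_seq E C [3, 1] = C2"
  proof -
    have f1: "finite (E 1)" by (rule fin) simp
    show ?thesis unfolding comp_mut_seq_def C2_def using C1 fold_mut_cmf[OF f1 C1z]
      by (simp add: comp_mut_def)
  qed

  have P0: "0 \<le> C i x" if "i \<in> E 0" "x \<in> E 3" for i x by (rule nn[of 0 3]) (use that Bv ab a0 in auto)
  have Q0: "0 \<le> C x j" if "x \<in> E 3" "j \<in> E 2" for x j by (rule nn[of 3 2]) (use that Bv in auto)
  have R0: "C i y \<le> 0" if "i \<in> E 0" "y \<in> E 1" for i y
  proof -
    have "0 \<le> C y i" by (rule nn[of 1 0]) (use that Bv in auto)
    moreover have "C i y = - C y i" by (rule sk[of 0 1]) (use that in auto)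
    ultimately show ?thesis by linarith
  qed
  have T0: "C y j \<le> 0" if "y \<in> E 1" "j \<in> E 2" for y j
  proof -
    have "0 \<le> C j y" by (rule nn[of 2 1]) (use that Bv a0 in auto)
    moreover have "C y j = - C j y" by (rule sk[of 1 2]) (use that in auto)
    ultimately show ?thesis by linarith
  qed
  have sPr: "(\<Sum>x\<in>E 3. C i x) = 1" if "i \<in> E 0" for i using rs[of 0 3 i] that Bv by simp
  have sRr: "(\<Sum>y\<in>E 1. C i y) = -1" if "i \<in> E 0" for i using rs[of 0 1 i] that Bv by simp
  have sQc: "(\<Sum>x\<in>E 3. C x j) = 1" if "j \<in> E 2" for j using cs[of 3 2 j] that Bv by simp
  have sTc: "(\<Sum>y\<in>E 1. C y j) = -1" if "j \<in> E 2" for j using cs[of 1 2 j] that Bv by simp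
  have sQr: "(\<Sum>j\<in>E 2. C x j) = b" if "x \<in> E 3" for x using rs[of 3 2 x] that Bv by simp
  have sTr: "(\<Sum>j\<in>E 2. C y j) = -a" if "y \<in> E 1" for y using rs[of 1 2 y] that Bv by simp
  have sPc: "(\<Sum>i\<in>E 0. C i x) = b" if "x \<in> E 3" for x using cs[of 0 3 x] that Bv by simp
  have sRc: "(\<Sum>i\<in>E 0. C i y) = -a" if "y \<in> E 1" for y using cs[of 0 1 y] that Bv by simp
  have f0: "finite (E 0)" "finite (E 1)" "finite (E 2)" "finite (E 3)" using fin by auto
  have uP: "\<exists>s\<in>E 3. \<forall>t\<in>E 3. C i t = (if t = s then 1 else 0)" if "i \<in> E 0" for i
    using uniq[of "E 3" "C i"] f0 P0[OF that] sPr[OF that] by auto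
  have uQ: "\<exists>s\<in>E 3. \<forall>t\<in>E 3. C t j = (if t = s then 1 else 0)" if "j \<in> E 2" for j
    using uniq[of "E 3" "\<lambda>t. C t j"] f0 Q0[OF _ that] sQc[OF that] by auto
  have uR: "\<exists>s\<in>E 1. \<forall>t\<in>E 1. C i t = (if t = s then -1 else 0)" if "i \<in> E 0" for i
  proof -
    have "\<exists>s\<in>E 1. \<forall>t\<in>E 1. - C i t = (if t = s then 1 else 0)"
      using uniq[of "E 1" "\<lambda>t. - C i t"] f0 R0[OF that] sRr[OF that] by (auto simp: sum_negf)
    then obtain s where "s \<in> E 1" "\<forall>t\<in>E 1. - C i t = (if t = s then 1 else 0)" by blast
    then show ?thesis by (intro bexI[of _ s]) (auto split: if_splits)
  qed
  have uT: "\<exists>s\<in>E 1. \<forall>t\<in>E 1. C t j = (if t = s then -1 else 0)" if "j \<in> E 2" for j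
  proof -
    have "\<exists>s\<in>E 1. \<forall>t\<in>E 1. - C t j = (if t = s then 1 else 0)"
      using uniq[of "E 1" "\<lambda>t. - C t j"] f0 T0[OF _ that] sTc[OF that] by (auto simp: sum_negf)
    then obtain s where "s \<in> E 1" "\<forall>t\<in>E 1. - C t j = (if t = s then 1 else 0)" by blast
    then show ?thesis by (intro bexI[of _ s]) (auto split: if_splits)
  qed
  have C2v: "C2 i j = (\<Sum>x\<in>E 3. C i x * C x j) - (\<Sum>y\<in>E 1. C i y * C y j)"
    if ij: "i \<in> E 0" "j \<in> E 2" for i j
  proof -
    have ni: "i \<notin> E 1" "j \<notin> E 1" "i \<notin> E 3" "j \<notin> E 3" using ij d by auto
    have e1: "C2 i j = C1 i j + (\<Sum>y\<in>E 1. (C1 i y * \<bar>C1 y j\<bar> + \<bar>C1 i y\<bar> * C1 y j) div 2)"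
      using ni unfolding C2_def cmf_def by simp
    have e2: "C1 i j = (\<Sum>x\<in>E 3. C i x * C x j)"
    proof -
      have "C1 i j = C i j + (\<Sum>x\<in>E 3. (C i x * \<bar>C x j\<bar> + \<bar>C i x\<bar> * C x j) div 2)"
        by (rule C1v) (use ni in auto)
      also have "\<dots> = (\<Sum>x\<in>E 3. C i x * C x j)"
      proof -
        have "C i j = 0" by (rule z02[OF ij])
        moreover have "(C i x * \<bar>C x j\<bar> + \<bar>C i x\<bar> * C x j) div 2 = C i x * C x j" if "x \<in> E 3" for x
          using P0[OF ij(1) that] Q0[OF that ij(2)] by simp
        ultimately show ?thesis by (simp cong: sum.cong)
      qed
      finally show ?thesis .
    qed
    have e3: "(C1 i y * \<bar>C1 y j\<bar> + \<bar>C1 i y\<bar> * C1 y j) div 2 = - (C i y * C y j)" if y: "y \<in> E 1" for y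
    proof -
      have "y \<notin> E 3" using y d by auto
      have a1: "C1 i y = C i y"
        unfolding C1v[OF ni(3) \<open>y \<notin> E 3\<close>] using z31[OF _ y] by simp
      have a2: "C1 y j = C y j"
        unfolding C1v[OF \<open>y \<notin> E 3\<close> ni(4)] using z13[OF y] by simp
      have "C i y \<le> 0" "C y j \<le> 0" using R0[OF ij(1) y] T0[OF y ij(2)] by auto
      then have "C i y * \<bar>C y j\<bar> + \<bar>C i y\<bar> * C y j = 2 * (- (C i y * C y j))"
        by (simp add: abs_if algebra_simps)
      then show ?thesis unfolding a1 a2 by simp
    qed
    show ?thesis unfolding e1 e2 using e3 by (simp add: sum_negf cong: sum.cong)
  qed
  obtain i0 where i0: "i0 \<in> E 0" using ne0 by blast
  obtain x0 where x0: "x0 \<in> E 3" "\<forall>t\<in>E 3. C i0 t = (if t = x0 then 1 else 0)" using uP[OF i0] by blast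
  obtain y0 where y0: "y0 \<in> E 1" "\<forall>t\<in>E 1. C i0 t = (if t = y0 then -1 else 0)" using uR[OF i0] by blast
  have pos: "\<exists>x\<in>E 0. \<exists>y\<in>E 2. C2 x y > 0"
  proof -
    have "(\<Sum>j\<in>E 2. C x0 j + C y0 j) = b - a"
      using sQr[OF x0(1)] sTr[OF y0(1)] by (simp add: sum.distrib)
    then have "\<exists>j\<in>E 2. C x0 j + C y0 j > 0"
      using ab sum_nonpos[of "E 2" "\<lambda>j. C x0 j + C y0 j"] by (metis diff_gt_0_iff_gt not_le)
    then obtain j where j: "j \<in> E 2" "C x0 j + C y0 j > 0" by blast
    obtain xj where xj: "xj \<in> E 3" "\<forall>t\<in>E 3. C t j = (if t = xj then 1 else 0)" using uQ[OF j(1)] by blast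
    obtain yj where yj: "yj \<in> E 1" "\<forall>t\<in>E 1. C t j = (if t = yj then -1 else 0)" using uT[OF j(1)] by blast
    have v1: "C x0 j = 1" "C y0 j = 0"
      using j(2) xj(2)[rule_format, OF x0(1)] yj(2)[rule_format, OF y0(1)] by (auto split: if_splits)
    have "C2 i0 j = 1 * C x0 j - (-1) * C y0 j"
      unfolding C2v[OF i0 j(1)] using sum_ind[OF f0(4) x0] sum_ind[OF f0(2) y0] by simp
    then have "C2 i0 j > 0" using v1 by simp
    then show ?thesis using i0 j(1) by blast
  qed
  have neg: "\<exists>x\<in>E 0. \<exists>y\<in>E 2. C2 x y < 0"
  proof (rule ccontr)
    assume "\<not> ?thesis"
    then have H: "0 \<le> C2 i j" if "i \<in> E 0" "j \<in> E 2" for i j using that by force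
    have K: "C i x0 = 1" if y: "y \<in> E 1" and i1: "i1 \<in> E 0" and i: "i \<in> E 0"
      and c1: "C i1 x0 = 1" "C i1 y = -1" and c2: "C i y = -1" for y i1 i
    proof -
      have "\<exists>j\<in>E 2. C y j < 0"
      proof (rule ccontr)
        assume "\<not> ?thesis"
        then have "0 \<le> (\<Sum>j\<in>E 2. C y j)" by (intro sum_nonneg) force
        then show False using sTr[OF y] a0 by simp
      qed
      then obtain j where j: "j \<in> E 2" "C y j < 0" by blast
      obtain xj where xj: "xj \<in> E 3" "\<forall>t\<in>E 3. C t j = (if t = xj then 1 else 0)" using uQ[OF j(1)] by blast
      obtain yj where yj: "yj \<in> E 1" "\<forall>t\<in>E 1. C t j = (if t = yj then -1 else 0)" using uT[OF j(1)] by blast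
      have cyj: "C y j = -1" using j(2) yj(2)[rule_format, OF y] by (auto split: if_splits)
      obtain s1 where s1: "s1 \<in> E 3" "\<forall>t\<in>E 3. C i1 t = (if t = s1 then 1 else 0)" using uP[OF i1] by blast
      obtain r1 where r1: "r1 \<in> E 1" "\<forall>t\<in>E 1. C i1 t = (if t = r1 then -1 else 0)" using uR[OF i1] by blast
      have "s1 = x0" using c1(1) s1(2)[rule_format, OF x0(1)] by (auto split: if_splits)
      have "r1 = y" using c1(2) r1(2)[rule_format, OF y] by (auto split: if_splits)
      have "C2 i1 j = 1 * C s1 j - (-1) * C r1 j"
        unfolding C2v[OF i1 j(1)] using sum_ind[OF f0(4) s1] sum_ind[OF f0(2) r1] by simp
      then have "1 \<le> C x0 j" using H[OF i1 j(1)] cyj \<open>s1 = x0\<close> \<open>r1 = y\<close> by simp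
      then have "x0 = xj" using xj(2)[rule_format, OF x0(1)] by (auto split: if_splits)
      obtain s where s: "s \<in> E 3" "\<forall>t\<in>E 3. C i t = (if t = s then 1 else 0)" using uP[OF i] by blast
      obtain r where r: "r \<in> E 1" "\<forall>t\<in>E 1. C i t = (if t = r then -1 else 0)" using uR[OF i] by blast
      have "r = y" using c2 r(2)[rule_format, OF y] by (auto split: if_splits)
      have "C2 i j = 1 * C s j - (-1) * C r j"
        unfolding C2v[OF i j(1)] using sum_ind[OF f0(4) s] sum_ind[OF f0(2) r] by simp
      then have "1 \<le> C s j" using H[OF i j(1)] cyj \<open>r = y\<close> by simp
      then have "s = xj" using xj(2)[rule_format, OF s(1)] by (auto split: if_splits)
      then show ?thesis using s(2)[rule_format, OF x0(1)] \<open>x0 = xj\<close> by simp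
    qed
    have vP: "C i x0 = 0 \<or> C i x0 = 1" if "i \<in> E 0" for i
      using uP[OF that] x0(1) by (auto split: if_splits)
    have vR: "C i y = 0 \<or> C i y = -1" if "i \<in> E 0" "y \<in> E 1" for i y
      using uR[OF that(1)] that(2) by (auto split: if_splits)
    have "b = (\<Sum>i\<in>E 0. C i x0)" using sPc[OF x0(1)] by simp
    also have "\<dots> = (\<Sum>i\<in>E 0. C i x0 * (\<Sum>y\<in>E 1. - C i y))"
      using sRr by (simp add: sum_negf cong: sum.cong)
    also have "\<dots> = (\<Sum>i\<in>E 0. \<Sum>y\<in>E 1. C i x0 * (- C i y))"
      by (simp add: sum_distrib_left)
    also have "\<dots> = (\<Sum>y\<in>E 1. \<Sum>i\<in>E 0. C i x0 * (- C i y))"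
      by (rule sum.swap)
    finally have beq: "b = (\<Sum>y\<in>E 1. \<Sum>i\<in>E 0. C i x0 * (- C i y))" .
    have "a dvd (\<Sum>i\<in>E 0. C i x0 * (- C i y))" if y: "y \<in> E 1" for y
    proof (cases "\<exists>i1\<in>E 0. C i1 x0 = 1 \<and> C i1 y = -1")
      case True
      then obtain i1 where i1: "i1 \<in> E 0" "C i1 x0 = 1" "C i1 y = -1" by blast
      have "(\<Sum>i\<in>E 0. C i x0 * (- C i y)) = (\<Sum>i\<in>E 0. - C i y)"
      proof (rule sum.cong[OF refl])
        fix i assume i: "i \<in> E 0"
        show "C i x0 * (- C i y) = - C i y"
          using vR[OF i y] K[OF y i1(1) i i1(2) i1(3)] by auto
      qed
      also have "\<dots> = a" using sRc[OF y] by (simp add: sum_negf)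
      finally show ?thesis by simp
    next
      case False
      have "(\<Sum>i\<in>E 0. C i x0 * (- C i y)) = 0"
      proof (rule sum.neutral, rule ballI)
        fix i assume i: "i \<in> E 0"
        show "C i x0 * (- C i y) = 0" using vR[OF i y] vP[OF i] False i by auto
      qed
      then show ?thesis by simp
    qed
    then have "a dvd b" unfolding beq by (rule dvd_sum)
    then show False using nd by simp
  qed
  show ?thesis using pos neg C2 by simp
qed


lemma all4: "(\<forall>i<(4::nat). P i) = (P 0 \<and> P 1 \<and> P 2 \<and> P 3)"
proof
  assume "P 0 \<and> P 1 \<and> P 2 \<and> P 3"
  moreover have "i < 4 \<Longrightarrow> i = 0 \<or> i = 1 \<or> i = 2 \<or> i = 3" for i :: nat by arith
  ultimately show "\<forall>i<(4::nat). P i" by blast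
qed simp

theorem mainTheorem19:
  fixes a b :: int
  assumes "0 < a" and "a < b" and "\<not> a dvd b"
  shows "skew_symmetrizable 4 (Bmat a b) \<and> skew_symmetrizer 4 (Bmat a b) (dex a b)
    \<and> (gcd a b = 1 \<longrightarrow> strongly_primitive 4 (Bmat a b))
    \<and> (\<forall>(C :: 'v \<Rightarrow> 'v \<Rightarrow> int) e E. \<not> is_global_unfolding 4 (Bmat a b) C e E)
    \<and> (\<forall>(C :: 'v \<Rightarrow> 'v \<Rightarrow> int) e E. is_unfolding 4 (Bmat a b) C e E \<longrightarrow>
         \<not> is_unfolding 4 (mut_seq (Bmat a b) [3, 1]) (comp_mut_seq E C [3, 1]) e E
         \<and> (\<exists>x\<in>E 0. \<exists>y\<in>E 2. comp_mut_seq E C [3, 1] x y > 0)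
         \<and> (\<exists>x\<in>E 0. \<exists>y\<in>E 2. comp_mut_seq E C [3, 1] x y < 0))"
proof -
  have ss: "skew_symmetrizer 4 (Bmat a b) (dex a b)"
    unfolding skew_symmetrizer_def all4 using assms(1,2) by (simp add: Bmat_def dex_def)
  have sp: "gcd a b = 1 \<longrightarrow> strongly_primitive 4 (Bmat a b)"
  proof
    assume g: "gcd a b = 1"
    have "coprime a b" using g by (simp add: coprime_iff_gcd_eq_1)
    then have "\<forall>i<4. \<forall>j<4. i \<noteq> j \<longrightarrow> coprime (dex a b i) (dex a b j)"
      unfolding all4 by (simp add: dex_def coprime_commute)
    then show "strongly_primitive 4 (Bmat a b)" unfolding strongly_primitive_def using ss by blast
  qed
  have m: "\<not> is_unfolding 4 (mut_seq (Bmat a b) [3, 1]) (comp_mut_seq E C [3, 1]) e E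
         \<and> (\<exists>x\<in>E 0. \<exists>y\<in>E 2. comp_mut_seq E C [3, 1] x y > 0)
         \<and> (\<exists>x\<in>E 0. \<exists>y\<in>E 2. comp_mut_seq E C [3, 1] x y < 0)"
    if U: "is_unfolding 4 (Bmat a b) C e E" for C :: "'v \<Rightarrow> 'v \<Rightarrow> int" and e E
  proof -
    have c: "(\<exists>x\<in>E 0. \<exists>y\<in>E 2. comp_mut_seq E C [3, 1] x y > 0)
       \<and> (\<exists>x\<in>E 0. \<exists>y\<in>E 2. comp_mut_seq E C [3, 1] x y < 0)" by (rule core[OF assms U])
    have bv: "mut_seq (Bmat a b) [3,1] 0 2 = b - a"
      using assms(1,2) by (simp add: mut_seq_def mut_def Bmat_def)
    have "\<not> is_unfolding 4 (mut_seq (Bmat a b) [3, 1]) (comp_mut_seq E C [3, 1]) e E"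
    proof
      assume V: "is_unfolding 4 (mut_seq (Bmat a b) [3, 1]) (comp_mut_seq E C [3, 1]) e E"
      have "\<forall>i<4. \<forall>j<4. mut_seq (Bmat a b) [3, 1] i j \<ge> 0 \<longrightarrow>
          (\<forall>x\<in>E i. \<forall>y\<in>E j. comp_mut_seq E C [3, 1] x y \<ge> 0)"
        using V[unfolded is_unfolding_def] by (elim conjE) assumption
      note R = this[rule_format, of 0 2]
      have "0 \<le> comp_mut_seq E C [3, 1] x y" if "x \<in> E 0" "y \<in> E 2" for x y
        by (rule R) (use that bv assms(2) in auto)
      then have "\<forall>x\<in>E 0. \<forall>y\<in>E 2. comp_mut_seq E C [3, 1] x y \<ge> 0" by blast
      then show False using c by force
    qed
    then show ?thesis using c by blast
  qed
  have ng: "\<forall>(C :: 'v \<Rightarrow> 'v \<Rightarrow> int) e E. \<not> is_global_unfolding 4 (Bmat a b) C e E"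
  proof (intro allI notI)
    fix C :: "'v \<Rightarrow> 'v \<Rightarrow> int" and e E
    assume G: "is_global_unfolding 4 (Bmat a b) C e E"
    then have U: "is_unfolding 4 (Bmat a b) C e E" unfolding is_global_unfolding_def by blast
    have "set [3,1::nat] \<subseteq> {..<4}" by auto
    then have "is_unfolding 4 (mut_seq (Bmat a b) [3, 1]) (comp_mut_seq E C [3, 1]) e E"
      using G unfolding is_global_unfolding_def by blast
    then show False using m[OF U] by blast
  qed
  show ?thesis using ss sp ng m unfolding skew_symmetrizable_def by blast
qed

end
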